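(* Let $\zeta=e^{5\pi i/6}$ (a primitive $12$th root of unity) and $m^{I}=\begin{pmatrix}\frac23&-\frac7{12}\\-\frac7{12}&\frac23\end{pmatrix}$, $m^{II}=\begin{pmatrix}\frac23&-\frac34\\-\frac34&1\end{pmatrix}$, $m^{III}=\begin{pmatrix}\frac16&-\frac14\\-\frac14&1\end{pmatrix}$. Then the braidings $e^{i\pi m^{X}_{kl}}$ have diagrams: I: $q_{11}=q_{22}=-\zeta^2$, $q_{12}q_{21}=\zeta$, Cartan matrix $\begin{pmatrix}2&-2\\-2&2\end{pmatrix}$; II: $q_{11}=-\zeta^2$, $q_{22}=-1$, $q_{12}q_{21}=\zeta^3$, Cartan matrix $\begin{pmatrix}2&-2\\-1&2\end{pmatrix}$; III: $q_{11}=-\zeta^{-1}$, $q_{22}=-1$, $q_{12}q_{21}=-\zeta^3$, Cartan matrix $\begin{pmatrix}2&-3\\-1&2\end{pmatrix}$. Moreover $m^{II}$ is the reflection $\mathcal R^1$ of $m^I$ (new simple roots $-\alpha_1,\alpha_2+2\alpha_1$), $m^{III}=P^Tm^{II}P$ with $P=\begin{pmatrix}1&0\\1&-1\end{pmatrix}$ (the reflection of chamber II at its second simple root), and $m^I$ realises $q^I$; in these chambers every simple root is $m$-truncation except the first simple root of chamber III, which is $m$-Cartan.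
   Context: Let $q=(q_{ij})$ be a diagonal braiding matrix, $\chi$ the bicharacter on $\mathbb Z^n$ with $\chi(\alpha_i,\alpha_j)=q_{ij}$ on the standard basis. Its Cartan matrix has $a_{ii}=2$ and $a_{ij}=-\min\{s\in\mathbb Z_{\ge0}:q_{ii}^{-s}=q_{ij}q_{ji}\text{ or }q_{ii}^{s+1}=1\}$. The reflection $\mathcal R^k$ is $\alpha_i\mapsto\alpha_i-a_{ki}\alpha_k$; reflected braiding $\chi(\mathcal R^k\alpha_i,\mathcal R^k\alpha_j)$; for a real symmetric $m$ (Gram matrix of $(\cdot,\cdot)_m$), $\mathcal R^k(m)_{ij}=(\mathcal R^k\alpha_i,\mathcal R^k\alpha_j)_m$. Condition (A) for a pair $i\neq j$: $2m_{ij}=a_{ij}m_{ii}$; (B): $(1-a_{ij})m_{ii}=2$. $m$ realises $q$ if $e^{i\pi m_{ij}}=q_{ij}$, every pair satisfies (A) or (B), and this persists after any finite sequence of reflections (each using the current Cartan matrix). A simple root is $m$-Cartan if (A) holds for all pairs $(i,j)$, $j\ne i$, and $m$-truncation if (B) does. *)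

theory Defs
  imports Complex_Main
begin

(* Conventions: simple roots are indexed 0..n-1 (paper's alpha_1 is index 0,
   alpha_2 is index 1). A braiding matrix is q :: nat => nat => complex and a
   real symmetric Gram matrix is m :: nat => nat => real; only entries with
   indices < n matter. *)

type_synonym braiding = "nat \<Rightarrow> nat \<Rightarrow> complex"
type_synonym gram = "nat \<Rightarrow> nat \<Rightarrow> real"

definition cartan :: "braiding \<Rightarrow> nat \<Rightarrow> nat \<Rightarrow> int" where
  "cartan q i j = (if i = j then 2
     else - int (LEAST s::nat. q i i powi (- int s) = q i j * q j i \<or> q i i ^ (s + 1) = 1))"

text \<open>Reflected braiding chi(R^k alpha_i, R^k alpha_j) where
  R^k alpha_i = alpha_i - a_ki alpha_k, chi the bicharacter of q.\<close>
definition refl_braiding :: "braiding \<Rightarrow> nat \<Rightarrow> braiding" where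
  "refl_braiding q k i j =
     q i j * q k j powi (- cartan q k i) * q i k powi (- cartan q k j)
       * q k k powi (cartan q k i * cartan q k j)"

text \<open>Reflected Gram matrix R^k(m)_ij = (R^k alpha_i, R^k alpha_j)_m,
  with the Cartan matrix of the braiding q.\<close>
definition refl_gram :: "braiding \<Rightarrow> gram \<Rightarrow> nat \<Rightarrow> gram" where
  "refl_gram q m k i j =
     m i j - of_int (cartan q k i) * m k j - of_int (cartan q k j) * m i k
       + of_int (cartan q k i * cartan q k j) * m k k"

fun refl_seq :: "braiding \<times> gram \<Rightarrow> nat list \<Rightarrow> braiding \<times> gram" where
  "refl_seq qm [] = qm"
| "refl_seq (q, m) (k # ks) = refl_seq (refl_braiding q k, refl_gram q m k) ks"

definition condA :: "braiding \<Rightarrow> gram \<Rightarrow> nat \<Rightarrow> nat \<Rightarrow> bool" where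
  "condA q m i j \<longleftrightarrow> 2 * m i j = of_int (cartan q i j) * m i i"

definition condB :: "braiding \<Rightarrow> gram \<Rightarrow> nat \<Rightarrow> nat \<Rightarrow> bool" where
  "condB q m i j \<longleftrightarrow> (1 - of_int (cartan q i j)) * m i i = 2"

definition pairs_ok :: "nat \<Rightarrow> braiding \<Rightarrow> gram \<Rightarrow> bool" where
  "pairs_ok n q m \<longleftrightarrow> (\<forall>i<n. \<forall>j<n. i \<noteq> j \<longrightarrow> condA q m i j \<or> condB q m i j)"

definition symmetric_gram :: "nat \<Rightarrow> gram \<Rightarrow> bool" where
  "symmetric_gram n m \<longleftrightarrow> (\<forall>i<n. \<forall>j<n. m i j = m j i)"

definition realises :: "nat \<Rightarrow> gram \<Rightarrow> braiding \<Rightarrow> bool" where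
  "realises n m q \<longleftrightarrow> symmetric_gram n m
     \<and> (\<forall>i<n. \<forall>j<n. exp (\<i> * of_real pi * of_real (m i j)) = q i j)
     \<and> (\<forall>ks. set ks \<subseteq> {..<n} \<longrightarrow>
            pairs_ok n (fst (refl_seq (q, m) ks)) (snd (refl_seq (q, m) ks)))"

definition braid_of :: "gram \<Rightarrow> braiding" where
  "braid_of m i j = exp (\<i> * of_real pi * of_real (m i j))"

definition m_cartan :: "nat \<Rightarrow> braiding \<Rightarrow> gram \<Rightarrow> nat \<Rightarrow> bool" where
  "m_cartan n q m i \<longleftrightarrow> (\<forall>j<n. j \<noteq> i \<longrightarrow> condA q m i j)"

definition m_truncation :: "nat \<Rightarrow> braiding \<Rightarrow> gram \<Rightarrow> nat \<Rightarrow> bool" where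
  "m_truncation n q m i \<longleftrightarrow> (\<forall>j<n. j \<noteq> i \<longrightarrow> condB q m i j)"

definition mat2 :: "'a \<Rightarrow> 'a \<Rightarrow> 'a \<Rightarrow> 'a \<Rightarrow> nat \<Rightarrow> nat \<Rightarrow> 'a" where
  "mat2 a b c d i j = (if i = 0 then (if j = 0 then a else b) else (if j = 0 then c else d))"

definition zeta12 :: complex where
  "zeta12 = exp (5 * of_real pi * \<i> / 6)"

definition mI :: gram where "mI = mat2 (2/3) (-7/12) (-7/12) (2/3)"
definition mII :: gram where "mII = mat2 (2/3) (-3/4) (-3/4) 1"
definition mIII :: gram where "mIII = mat2 (1/6) (-1/4) (-1/4) 1"
definition Pmat :: gram where "Pmat = mat2 1 0 1 (-1)"

end

theory Submission imports Defs "HOL-Analysis.Complex_Transcendental" begin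

definition E :: "real \<Rightarrow> complex" where "E x = exp (\<i> * of_real pi * of_real x)"

lemma E_eq: "E x = E y \<longleftrightarrow> (\<exists>n::int. x = y + 2 * of_int n)"
proof -
  have "E x = E y \<longleftrightarrow> (\<exists>n::int. \<i> * of_real pi * of_real x = \<i> * of_real pi * of_real y + (of_int (2 * n) * pi) * \<i>)"
    unfolding E_def by (rule exp_eq)
  also have "\<dots> \<longleftrightarrow> (\<exists>n::int. x = y + 2 * of_int n)"
  proof (intro ex_cong1)
    fix n :: int
    have l: "\<i> * of_real pi * of_real x = \<i> * complex_of_real (pi * x)" by simp
    have r: "\<i> * of_real pi * of_real y + (of_int (2 * n) * pi) * \<i> = \<i> * complex_of_real (pi * (y + 2 * of_int n))"
      by (simp add: algebra_simps)
    have "\<i> * of_real pi * of_real x = \<i> * of_real pi * of_real y + (of_int (2 * n) * pi) * \<i>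
       \<longleftrightarrow> complex_of_real (pi * x) = complex_of_real (pi * (y + 2 * of_int n))"
      unfolding l r by simp
    also have "\<dots> \<longleftrightarrow> pi * x = pi * (y + 2 * of_int n)" by (simp only: of_real_eq_iff)
    also have "\<dots> \<longleftrightarrow> x = y + 2 * of_int n" by simp
    finally show "(\<i> * of_real pi * of_real x = \<i> * of_real pi * of_real y + (of_int (2 * n) * pi) * \<i>) = (x = y + 2 * of_int n)" .
  qed
  finally show ?thesis .
qed

lemma E_add: "E (x + y) = E x * E y" unfolding E_def by (simp add: distrib_left exp_add)
lemma E_powi: "E x powi n = E (of_int n * x)" unfolding E_def by (simp add: exp_power_int mult_ac)
lemma E_pow: "E x ^ n = E (of_nat n * x)" unfolding E_def by (metis exp_of_nat_mult of_real_of_nat_eq of_real_mult mult.left_commute mult.assoc)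
lemma E_1: "E x = 1 \<longleftrightarrow> (\<exists>n::int. x = 2 * of_int n)"
  using E_eq[of x 0] by (simp add: E_def)

lemma braid_E: "braid_of m i j = E (m i j)" unfolding braid_of_def E_def ..

definition Pc :: "real \<Rightarrow> real \<Rightarrow> nat \<Rightarrow> bool" where
  "Pc d c s \<longleftrightarrow> (\<exists>n::int. - real s * d = c + 2 * of_int n) \<or> (\<exists>n::int. real (s+1) * d = 2 * of_int n)"

lemma cartan_braid:
  assumes "i \<noteq> j"
  shows "cartan (braid_of m) i j = - int (LEAST s. Pc (m i i) (m i j + m j i) s)"
proof -
  have "\<And>s. (braid_of m i i powi (- int s) = braid_of m i j * braid_of m j i \<or> braid_of m i i ^ (s + 1) = 1)
     \<longleftrightarrow> Pc (m i i) (m i j + m j i) s"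
    unfolding braid_E E_powi E_pow E_add[symmetric] E_eq E_1 Pc_def by simp
  then show ?thesis using assms unfolding cartan_def by simp
qed

lemma Pc_int:
  assumes "d = of_int D / 12" "c = of_int Cc / 12"
  shows "Pc d c s \<longleftrightarrow> ((24::int) dvd (- int s * D - Cc) \<or> (24::int) dvd (int (s+1) * D))"
proof -
  have a: "(- real s * d = c + 2 * of_int n) \<longleftrightarrow> - int s * D - Cc = 24 * n" for n :: int
  proof -
    have "(- real s * d = c + 2 * of_int n) \<longleftrightarrow> (of_int (- int s * D - Cc) :: real) = of_int (24 * n)"
      unfolding assms by (simp add: field_simps)
    then show ?thesis by (simp only: of_int_eq_iff)
  qed
  have b: "(real (s+1) * d = 2 * of_int n) \<longleftrightarrow> int (s+1) * D = 24 * n" for n :: int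
  proof -
    have "(real (s+1) * d = 2 * of_int n) \<longleftrightarrow> (of_int (int (s+1) * D) :: real) = of_int (24 * n)"
      unfolding assms by (simp add: field_simps)
    then show ?thesis by (simp only: of_int_eq_iff)
  qed
  show ?thesis unfolding Pc_def a b dvd_def by (auto simp: mult.commute)
qed

lemma least_val:
  assumes "P sz" "\<And>s. s < sz \<Longrightarrow> \<not> P s"
  shows "(LEAST s::nat. P s) = sz"
  using assms by (metis Least_equality not_less)


lemma cartan_conc:
  assumes "i \<noteq> j" "m i i = of_int D / 12" "m i j + m j i = of_int Cc / 12"
    "(24::int) dvd (- int sz * D - Cc) \<or> (24::int) dvd (int (sz+1) * D)"
    "\<forall>s<sz. \<not> ((24::int) dvd (- int s * D - Cc) \<or> (24::int) dvd (int (s+1) * D))"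
    "r = - int sz"
  shows "cartan (braid_of m) i j = r"
  unfolding cartan_braid[OF assms(1)] assms(6)
  by (subst least_val[of _ sz]) (use assms in \<open>simp_all add: Pc_int[OF assms(2,3)]\<close>)

definition mIIb :: gram where "mIIb = mat2 1 (-3/4) (-3/4) (2/3)"
definition mIIIb :: gram where "mIIIb = mat2 1 (-1/4) (-1/4) (1/6)"

lemmas mdefs = mI_def mII_def mIII_def mIIb_def mIIIb_def mat2_def

lemma all2: "(\<forall>i<(2::nat). P i) \<longleftrightarrow> P 0 \<and> P 1"
  by (auto simp: numeral_2_eq_2 less_Suc_eq)

lemma cI01: "cartan (braid_of mI) 0 1 = -2"
  by (rule cartan_conc[where D=8 and Cc="-14" and sz=2]) (simp_all add: mdefs, presburger?)


definition agree :: "gram \<Rightarrow> gram \<Rightarrow> bool" where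
  "agree m M \<longleftrightarrow> (\<forall>i<2. \<forall>j<2. m i j = M i j)"

lemma cdiag: "cartan q i i = 2" unfolding cartan_def by simp

lemma c_mI_01: "cartan (braid_of mI) 0 1 = -2"
  by (rule cartan_conc[where D=8 and Cc="-14" and sz=2]) (simp_all add: mdefs, presburger?)

lemma c_mI_10: "cartan (braid_of mI) 1 0 = -2"
  by (rule cartan_conc[where D=8 and Cc="-14" and sz=2]) (simp_all add: mdefs, presburger?)

lemma c_mII_01: "cartan (braid_of mII) 0 1 = -2"
  by (rule cartan_conc[where D=8 and Cc="-18" and sz=2]) (simp_all add: mdefs, presburger?)

lemma c_mII_10: "cartan (braid_of mII) 1 0 = -1"
  by (rule cartan_conc[where D=12 and Cc="-18" and sz=1]) (simp_all add: mdefs, presburger?)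

lemma c_mIIb_01: "cartan (braid_of mIIb) 0 1 = -1"
  by (rule cartan_conc[where D=12 and Cc="-18" and sz=1]) (simp_all add: mdefs, presburger?)

lemma c_mIIb_10: "cartan (braid_of mIIb) 1 0 = -2"
  by (rule cartan_conc[where D=8 and Cc="-18" and sz=2]) (simp_all add: mdefs, presburger?)

lemma c_mIII_01: "cartan (braid_of mIII) 0 1 = -3"
  by (rule cartan_conc[where D=2 and Cc="-6" and sz=3]) (simp_all add: mdefs, presburger?)

lemma c_mIII_10: "cartan (braid_of mIII) 1 0 = -1"
  by (rule cartan_conc[where D=12 and Cc="-6" and sz=1]) (simp_all add: mdefs, presburger?)

lemma c_mIIIb_01: "cartan (braid_of mIIIb) 0 1 = -1"
  by (rule cartan_conc[where D=12 and Cc="-6" and sz=1]) (simp_all add: mdefs, presburger?)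

lemma c_mIIIb_10: "cartan (braid_of mIIIb) 1 0 = -3"
  by (rule cartan_conc[where D=2 and Cc="-6" and sz=3]) (simp_all add: mdefs, presburger?)

lemmas cvals = c_mI_01 c_mI_10 c_mII_01 c_mII_10 c_mIIb_01 c_mIIb_10 c_mIII_01 c_mIII_10 c_mIIIb_01 c_mIIIb_10

lemma r_mI_0: "agree (refl_gram (braid_of mI) mI 0) mII"
  unfolding agree_def all2 refl_gram_def cvals cdiag by (simp add: mdefs)

lemma r_mI_1: "agree (refl_gram (braid_of mI) mI 1) mIIb"
  unfolding agree_def all2 refl_gram_def cvals cdiag by (simp add: mdefs)

lemma r_mII_0: "agree (refl_gram (braid_of mII) mII 0) mI"
  unfolding agree_def all2 refl_gram_def cvals cdiag by (simp add: mdefs)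

lemma r_mII_1: "agree (refl_gram (braid_of mII) mII 1) mIII"
  unfolding agree_def all2 refl_gram_def cvals cdiag by (simp add: mdefs)

lemma r_mIIb_0: "agree (refl_gram (braid_of mIIb) mIIb 0) mIIIb"
  unfolding agree_def all2 refl_gram_def cvals cdiag by (simp add: mdefs)

lemma r_mIIb_1: "agree (refl_gram (braid_of mIIb) mIIb 1) mI"
  unfolding agree_def all2 refl_gram_def cvals cdiag by (simp add: mdefs)

lemma r_mIII_0: "agree (refl_gram (braid_of mIII) mIII 0) mIII"
  unfolding agree_def all2 refl_gram_def cvals cdiag by (simp add: mdefs)

lemma r_mIII_1: "agree (refl_gram (braid_of mIII) mIII 1) mII"
  unfolding agree_def all2 refl_gram_def cvals cdiag by (simp add: mdefs)

lemma r_mIIIb_0: "agree (refl_gram (braid_of mIIIb) mIIIb 0) mIIb"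
  unfolding agree_def all2 refl_gram_def cvals cdiag by (simp add: mdefs)

lemma r_mIIIb_1: "agree (refl_gram (braid_of mIIIb) mIIIb 1) mIIIb"
  unfolding agree_def all2 refl_gram_def cvals cdiag by (simp add: mdefs)



lemma refl_braid: "refl_braiding (braid_of m) k = braid_of (refl_gram (braid_of m) m k)"
proof (intro ext)
  fix i j
  show "refl_braiding (braid_of m) k i j = braid_of (refl_gram (braid_of m) m k) i j"
    unfolding refl_braiding_def braid_E E_powi E_add[symmetric]
    by (rule arg_cong[where f=E]) (simp add: refl_gram_def algebra_simps braid_E[symmetric])
qed

lemma agree_cartan: "agree m M \<Longrightarrow> i<2 \<Longrightarrow> j<2 \<Longrightarrow> cartan (braid_of m) i j = cartan (braid_of M) i j"
  unfolding cartan_def braid_of_def agree_def by simp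

lemma agree_refl: "agree m M \<Longrightarrow> k<2 \<Longrightarrow> agree (refl_gram (braid_of m) m k) (refl_gram (braid_of M) M k)"
  unfolding agree_def refl_gram_def
  apply (intro allI impI)
  subgoal for i j using agree_cartan[of m M k i] agree_cartan[of m M k j] by (simp add: agree_def)
  done

lemma agree_trans: "agree a b \<Longrightarrow> agree b c \<Longrightarrow> agree a c"
  unfolding agree_def by simp

lemma agree_pairs: assumes a: "agree m M" shows "pairs_ok 2 (braid_of m) m = pairs_ok 2 (braid_of M) M"
proof -
  have h1: "\<And>i j. i<2 \<Longrightarrow> j<2 \<Longrightarrow> cartan (braid_of m) i j = cartan (braid_of M) i j"
    using agree_cartan[OF a] by simp
  have h2: "\<And>i j. i<2 \<Longrightarrow> j<2 \<Longrightarrow> m i j = M i j" using a unfolding agree_def by simp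
  show ?thesis unfolding pairs_ok_def condA_def condB_def by (simp add: h1 h2)
qed

definition St :: "gram set" where "St = {mI, mII, mIIb, mIII, mIIIb}"

definition good :: "gram \<Rightarrow> bool" where "good m \<longleftrightarrow> (\<exists>M\<in>St. agree m M)"

lemma good_refl: assumes "good m" "k<2" shows "good (refl_gram (braid_of m) m k)"
proof -
  obtain M where M: "M \<in> St" "agree m M" using assms(1) unfolding good_def by blast
  have a: "agree (refl_gram (braid_of m) m k) (refl_gram (braid_of M) M k)"
    using agree_refl[OF M(2) assms(2)] .
  have k: "k = 0 \<or> k = 1" using assms(2) by auto
  have "\<exists>T\<in>St. agree (refl_gram (braid_of M) M k) T"
    using M(1) k unfolding St_def
    apply (elim disjE insertE emptyE)
    apply (simp_all only:)
    apply (auto intro!: bexI intro: r_mI_0 r_mI_1 r_mII_0 r_mII_1 r_mIIb_0 r_mIIb_1 r_mIII_0 r_mIII_1 r_mIIIb_0 r_mIIIb_1 r_mI_1[unfolded One_nat_def] r_mII_1[unfolded One_nat_def] r_mIIb_1[unfolded One_nat_def] r_mIII_1[unfolded One_nat_def] r_mIIIb_1[unfolded One_nat_def])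
    done
  then show ?thesis using a agree_trans unfolding good_def by blast
qed

lemma p_mI: "pairs_ok 2 (braid_of mI) mI"
  unfolding pairs_ok_def all2 condA_def condB_def cvals cdiag by (simp add: mdefs)

lemma p_mII: "pairs_ok 2 (braid_of mII) mII"
  unfolding pairs_ok_def all2 condA_def condB_def cvals cdiag by (simp add: mdefs)

lemma p_mIIb: "pairs_ok 2 (braid_of mIIb) mIIb"
  unfolding pairs_ok_def all2 condA_def condB_def cvals cdiag by (simp add: mdefs)

lemma p_mIII: "pairs_ok 2 (braid_of mIII) mIII"
  unfolding pairs_ok_def all2 condA_def condB_def cvals cdiag by (simp add: mdefs)

lemma p_mIIIb: "pairs_ok 2 (braid_of mIIIb) mIIIb"
  unfolding pairs_ok_def all2 condA_def condB_def cvals cdiag by (simp add: mdefs)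

lemma pairs_St: "M \<in> St \<Longrightarrow> pairs_ok 2 (braid_of M) M"
  unfolding St_def using p_mI p_mII p_mIIb p_mIII p_mIIIb by blast

lemma good_pairs: "good m \<Longrightarrow> pairs_ok 2 (braid_of m) m"
  unfolding good_def using agree_pairs pairs_St by blast

lemma seq_good: "good m \<Longrightarrow> set ks \<subseteq> {..<2} \<Longrightarrow> \<exists>m'. refl_seq (braid_of m, m) ks = (braid_of m', m') \<and> good m'"
proof (induction ks arbitrary: m)
  case Nil then show ?case by auto
next
  case (Cons k ks)
  have "good (refl_gram (braid_of m) m k)" using good_refl Cons.prems by auto
  then show ?case using Cons by (simp add: refl_braid)
qed

lemma realI: "realises 2 mI (braid_of mI)"
proof -
  have g: "good mI" unfolding good_def St_def agree_def by auto
  have "symmetric_gram 2 mI" unfolding symmetric_gram_def all2 by (simp add: mdefs)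
  moreover have "\<forall>ks. set ks \<subseteq> {..<2} \<longrightarrow>
            pairs_ok 2 (fst (refl_seq (braid_of mI, mI) ks)) (snd (refl_seq (braid_of mI, mI) ks))"
    using seq_good[OF g] good_pairs by fastforce
  ultimately show ?thesis unfolding realises_def braid_of_def by simp
qed


lemma zeta_E: "zeta12 = E (5/6)" unfolding zeta12_def E_def by (simp add: mult_ac)
lemma neg_E: "- E x = E (x + 1)" unfolding E_add by (simp add: E_def)
lemma inv_E: "inverse (E x) = E (- x)" unfolding E_def by (simp add: exp_minus[symmetric])
lemma E_mult: "E x * E y = E (x + y)" by (simp add: E_add)
lemma E_eqI: "x = y + 2 * of_int n \<Longrightarrow> E x = E y" using E_eq by blast
lemma sum2: "(\<Sum>k<(2::nat). f k) = f 0 + f 1" by (simp add: numeral_2_eq_2)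

theorem mainTheorem12:
  shows
   "braid_of mI 0 0 = - (zeta12 ^ 2) \<and> braid_of mI 1 1 = - (zeta12 ^ 2)
    \<and> braid_of mI 0 1 * braid_of mI 1 0 = zeta12
    \<and> (\<forall>i<2. \<forall>j<2. cartan (braid_of mI) i j = mat2 2 (-2) (-2) 2 i j)
    \<and> braid_of mII 0 0 = - (zeta12 ^ 2) \<and> braid_of mII 1 1 = - 1
    \<and> braid_of mII 0 1 * braid_of mII 1 0 = zeta12 ^ 3
    \<and> (\<forall>i<2. \<forall>j<2. cartan (braid_of mII) i j = mat2 2 (-2) (-1) 2 i j)
    \<and> braid_of mIII 0 0 = - inverse zeta12 \<and> braid_of mIII 1 1 = - 1
    \<and> braid_of mIII 0 1 * braid_of mIII 1 0 = - (zeta12 ^ 3)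
    \<and> (\<forall>i<2. \<forall>j<2. cartan (braid_of mIII) i j = mat2 2 (-3) (-1) 2 i j)
    \<and> (\<forall>i<2. \<forall>j<2. mII i j = refl_gram (braid_of mI) mI 0 i j)
    \<and> (\<forall>i<2. \<forall>j<2. mIII i j = (\<Sum>k<2. \<Sum>l<2. Pmat k i * mII k l * Pmat l j))
    \<and> (\<forall>i<2. \<forall>j<2. mIII i j = refl_gram (braid_of mII) mII 1 i j)
    \<and> realises 2 mI (braid_of mI)
    \<and> m_truncation 2 (braid_of mI) mI 0 \<and> m_truncation 2 (braid_of mI) mI 1
    \<and> m_truncation 2 (braid_of mII) mII 0 \<and> m_truncation 2 (braid_of mII) mII 1
    \<and> m_cartan 2 (braid_of mIII) mIII 0 \<and> \<not> m_truncation 2 (braid_of mIII) mIII 0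
    \<and> m_truncation 2 (braid_of mIII) mIII 1"
proof -
  have m1: "(-1::complex) = E 1" using neg_E[of 0] by (simp add: E_def)
  have z1: "braid_of mI 0 0 = - (zeta12 ^ 2)" unfolding braid_E zeta_E E_pow neg_E
    by (rule E_eqI[where n="-1"]) (simp add: mdefs)
  have z2: "braid_of mI 1 1 = - (zeta12 ^ 2)" unfolding braid_E zeta_E E_pow neg_E
    by (rule E_eqI[where n="-1"]) (simp add: mdefs)
  have z3: "braid_of mI 0 1 * braid_of mI 1 0 = zeta12" unfolding braid_E zeta_E E_mult
    by (rule E_eqI[where n="-1"]) (simp add: mdefs)
  have z4: "braid_of mII 0 0 = - (zeta12 ^ 2)" unfolding braid_E zeta_E E_pow neg_E
    by (rule E_eqI[where n="-1"]) (simp add: mdefs)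
  have z5: "braid_of mII 1 1 = - 1" unfolding braid_E m1
    by (rule E_eqI[where n="0"]) (simp add: mdefs)
  have z6: "braid_of mII 0 1 * braid_of mII 1 0 = zeta12 ^ 3" unfolding braid_E zeta_E E_mult E_pow
    by (rule E_eqI[where n="-2"]) (simp add: mdefs)
  have z7: "braid_of mIII 0 0 = - inverse zeta12" unfolding braid_E zeta_E inv_E neg_E
    by (rule E_eqI[where n="0"]) (simp add: mdefs)
  have z8: "braid_of mIII 1 1 = - 1" unfolding braid_E m1
    by (rule E_eqI[where n="0"]) (simp add: mdefs)
  have z9: "braid_of mIII 0 1 * braid_of mIII 1 0 = - (zeta12 ^ 3)" unfolding braid_E zeta_E E_mult E_pow neg_E
    by (rule E_eqI[where n="-2"]) (simp add: mdefs)
  have c1: "\<forall>i<2. \<forall>j<2. cartan (braid_of mI) i j = mat2 2 (-2) (-2) 2 i j"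
    unfolding all2 cvals cdiag by (simp add: mat2_def)
  have c2: "\<forall>i<2. \<forall>j<2. cartan (braid_of mII) i j = mat2 2 (-2) (-1) 2 i j"
    unfolding all2 cvals cdiag by (simp add: mat2_def)
  have c3: "\<forall>i<2. \<forall>j<2. cartan (braid_of mIII) i j = mat2 2 (-3) (-1) 2 i j"
    unfolding all2 cvals cdiag by (simp add: mat2_def)
  have g1: "\<forall>i<2. \<forall>j<2. mII i j = refl_gram (braid_of mI) mI 0 i j"
    using r_mI_0 unfolding agree_def by simp
  have g2: "\<forall>i<2. \<forall>j<2. mIII i j = (\<Sum>k<2. \<Sum>l<2. Pmat k i * mII k l * Pmat l j)"
    unfolding all2 sum2 by (simp add: mdefs Pmat_def)
  have g3: "\<forall>i<2. \<forall>j<2. mIII i j = refl_gram (braid_of mII) mII 1 i j"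
    using r_mII_1 unfolding agree_def by simp
  have t: "m_truncation 2 (braid_of mI) mI 0 \<and> m_truncation 2 (braid_of mI) mI 1
    \<and> m_truncation 2 (braid_of mII) mII 0 \<and> m_truncation 2 (braid_of mII) mII 1
    \<and> m_cartan 2 (braid_of mIII) mIII 0 \<and> \<not> m_truncation 2 (braid_of mIII) mIII 0
    \<and> m_truncation 2 (braid_of mIII) mIII 1"
    unfolding m_truncation_def m_cartan_def all2 condA_def condB_def cvals by (simp add: mdefs)
  show ?thesis using z1 z2 z3 z4 z5 z6 z7 z8 z9 c1 c2 c3 g1 g2 g3 realI t by blast
qed

end
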